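(* Let $\Omega\subset\mathbb{R}^{2n}$ be a centrally symmetric convex body with $c^{\mathrm{lin}}_{\min}(\Omega)\ge\pi$, and let $(\ell,\ell')$ be a pair of transverse Lagrangian planes, with $\Pi_\ell$ the projection onto $\ell$ along $\ell'$ and $\Pi_{\ell'}$ the projection onto $\ell'$ along $\ell$. Then $(\Pi_\ell\Omega)^o_{\ell'}\subset\Pi_{\ell'}\Omega$, i.e. $(\Pi_\ell\Omega,\Pi_{\ell'}\Omega)$ is a Lagrangian polar dual pair.
   Context: Write $z=(x,p)\in\mathbb{R}^{2n}$, $\omega((x,p),(x',p'))=p\cdot x'-p'\cdot x$. $\mathrm{Sp}(n)$ is the group of linear automorphisms preserving $\omega$. $c^{\mathrm{lin}}_{\min}(\Omega)=\sup\{\pi R^2: S(B^{2n}(z_0,R))\subset\Omega,\ S\in\mathrm{Sp}(n),\ z_0\in\mathbb{R}^{2n}\}$ where $B^{2n}(z_0,R)$ is the closed Euclidean ball of radius $R$ centered at $z_0$. A Lagrangian plane is an $n$-dimensional subspace on which $\omega$ vanishes; $\ell,\ell'$ are transverse if $\ell\cap\ell'=0$. For a centrally symmetric convex body $X_\ell\subset\ell$, its Lagrangian polar dual in $\ell'$ is $X^o_{\ell'}=\{z'\in\ell':\omega(z,z')\le1\ \forall z\in X_\ell\}$; $(X_\ell,Y_{\ell'})$ is a Lagrangian polar dual pair if $X^o_{\ell'}\subset Y_{\ell'}$. *)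

theory Defs
  imports "HOL-Analysis.Analysis"
begin

text \<open>Phase space R^{2n} is modelled as (real^'n) \<times> (real^'n), z = (x,p);
  the product norm is the Euclidean norm on R^{2n}.\<close>

definition omega :: "((real^'n) \<times> (real^'n)) \<Rightarrow> ((real^'n) \<times> (real^'n)) \<Rightarrow> real" where
  "omega z z' = snd z \<bullet> fst z' - snd z' \<bullet> fst z"

definition symplectic :: "(((real^'n) \<times> (real^'n)) \<Rightarrow> ((real^'n) \<times> (real^'n))) \<Rightarrow> bool" where
  "symplectic S \<longleftrightarrow> linear S \<and> bij S \<and> (\<forall>z w. omega (S z) (S w) = omega z w)"

definition c_lin_min :: "((real^'n) \<times> (real^'n)) set \<Rightarrow> real" where
  "c_lin_min \<Omega> = Sup {pi * R^2 | R. \<exists>S z0. R > 0 \<and> symplectic S \<and> S ` cball z0 R \<subseteq> \<Omega>}"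

definition convex_body :: "'a::euclidean_space set \<Rightarrow> bool" where
  "convex_body K \<longleftrightarrow> compact K \<and> convex K \<and> interior K \<noteq> {}"

definition centrally_symmetric :: "'a::real_vector set \<Rightarrow> bool" where
  "centrally_symmetric K \<longleftrightarrow> (\<forall>z\<in>K. - z \<in> K)"

definition lagrangian_plane :: "((real^'n) \<times> (real^'n)) set \<Rightarrow> bool" where
  "lagrangian_plane L \<longleftrightarrow> subspace L \<and> dim L = CARD('n) \<and> (\<forall>z\<in>L. \<forall>w\<in>L. omega z w = 0)"

definition transverse :: "'a::real_vector set \<Rightarrow> 'a set \<Rightarrow> bool" where
  "transverse L L' \<longleftrightarrow> L \<inter> L' = {0}"

definition proj_along :: "'a::real_vector set \<Rightarrow> 'a set \<Rightarrow> 'a \<Rightarrow> 'a" where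
  "proj_along L L' z = (THE u. u \<in> L \<and> z - u \<in> L')"

definition lag_polar :: "((real^'n) \<times> (real^'n)) set \<Rightarrow> ((real^'n) \<times> (real^'n)) set \<Rightarrow> ((real^'n) \<times> (real^'n)) set" where
  "lag_polar X L' = {z' \<in> L'. \<forall>z\<in>X. omega z z' \<le> 1}"

end

theory Submission
  imports Defs
begin
lemma lag_sum_univ:
  fixes L L' :: "((real^'n) \<times> (real^'n)) set"
  assumes "lagrangian_plane L" "lagrangian_plane L'" "transverse L L'"
  shows "\<exists>u\<in>L. z - u \<in> L'"
proof -
  have sL: "subspace L" and sL': "subspace L'" and dL: "dim L = CARD('n)" and dL': "dim L' = CARD('n)"
    using assms(1,2) unfolding lagrangian_plane_def by auto
  have "L \<inter> L' = {0}" using assms(3) unfolding transverse_def by auto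
  hence "dim (L \<inter> L') = 0" by simp
  define T where "T = {x + y |x y. x \<in> L \<and> y \<in> L'}"
  have "dim T + dim (L \<inter> L') = dim L + dim L'"
    using dim_sums_Int[OF sL sL'] unfolding T_def .
  hence "dim T = DIM((real^'n) \<times> (real^'n))"
    using \<open>dim (L \<inter> L') = 0\<close> dL dL' by simp
  hence "span T = UNIV" by (rule dim_eq_full[THEN iffD1])
  moreover have "subspace T" unfolding T_def by (rule subspace_sums[OF sL sL'])
  ultimately have "T = UNIV" by (metis span_eq_iff)
  hence "z \<in> T" by simp
  then obtain x y where xy: "z = x + y" "x \<in> L" "y \<in> L'" unfolding T_def by blast
  have "z - x = y" using xy(1) by simp
  thus ?thesis using xy(2,3) by blast
qed

lemma proj_prop:
  fixes L L' :: "((real^'n) \<times> (real^'n)) set"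
  assumes "subspace L" "subspace L'" "transverse L L'" "\<exists>u\<in>L. z - u \<in> L'"
  shows "proj_along L L' z \<in> L \<and> z - proj_along L L' z \<in> L'"
proof -
  have uniq: "u1 = u2" if "u1 \<in> L" "z - u1 \<in> L'" "u2 \<in> L" "z - u2 \<in> L'" for u1 u2
  proof -
    have a: "u1 - u2 \<in> L" using subspace_diff[OF assms(1) that(1) that(3)] .
    have "(z - u2) - (z - u1) \<in> L'" using subspace_diff[OF assms(2) that(4) that(2)] .
    moreover have "(z - u2) - (z - u1) = u1 - u2" by simp
    ultimately have "u1 - u2 \<in> L'" by simp
    with a have "u1 - u2 \<in> L \<inter> L'" by blast
    hence "u1 - u2 = 0" using assms(3) unfolding transverse_def by blast
    thus ?thesis by simp
  qed
  from assms(4) obtain u where "u \<in> L" "z - u \<in> L'" by blast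
  hence "\<exists>!u. u \<in> L \<and> z - u \<in> L'" using uniq by blast
  thus ?thesis unfolding proj_along_def by (rule theI')
qed

lemma proj_self:
  fixes L L' :: "((real^'n) \<times> (real^'n)) set"
  assumes "subspace L" "subspace L'" "transverse L L'" "z \<in> L'"
  shows "proj_along L' L z = z"
proof -
  have t: "transverse L' L" using assms(3) unfolding transverse_def by blast
  have "z - z \<in> L" using subspace_0[OF assms(1)] by simp
  hence e: "\<exists>u\<in>L'. z - u \<in> L" using assms(4) by blast
  have P: "proj_along L' L z \<in> L' \<and> z - proj_along L' L z \<in> L" by (rule proj_prop[OF assms(2,1) t e])
  have "z - proj_along L' L z \<in> L'" using subspace_diff[OF assms(2) assms(4)] P by blast
  hence "z - proj_along L' L z \<in> L \<inter> L'" using P by blast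
  hence "z - proj_along L' L z = 0" using assms(3) unfolding transverse_def by blast
  thus ?thesis by simp
qed
theorem mainTheorem10:
  fixes \<Omega> L L' :: "((real^'n) \<times> (real^'n)) set"
  assumes "convex_body \<Omega>" and "centrally_symmetric \<Omega>"
    and "c_lin_min \<Omega> \<ge> pi"
    and "lagrangian_plane L" and "lagrangian_plane L'" and "transverse L L'"
  shows "lag_polar (proj_along L L' ` \<Omega>) L' \<subseteq> proj_along L' L ` \<Omega>"
proof
  fix z' assume zp: "z' \<in> lag_polar (proj_along L L' ` \<Omega>) L'"
  have sL: "subspace L" and sL': "subspace L'" and isoL': "\<forall>z\<in>L'. \<forall>w\<in>L'. omega z w = 0"
    using assms(4,5) unfolding lagrangian_plane_def by auto
  have cpt: "compact \<Omega>" and cvx: "convex \<Omega>" and int: "interior \<Omega> \<noteq> {}"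
    using assms(1) unfolding convex_body_def by auto
  have sym: "\<And>z. z \<in> \<Omega> \<Longrightarrow> -z \<in> \<Omega>" using assms(2) unfolding centrally_symmetric_def by auto
  have z'L': "z' \<in> L'" using zp unfolding lag_polar_def by auto
  have pol: "omega w z' \<le> 1" if "w \<in> \<Omega>" for w
  proof -
    have e: "\<exists>u\<in>L. w - u \<in> L'" by (rule lag_sum_univ[OF assms(4,5,6)])
    have P: "proj_along L L' w \<in> L \<and> w - proj_along L L' w \<in> L'" by (rule proj_prop[OF sL sL' assms(6) e])
    have "omega (proj_along L L' w) z' \<le> 1" using zp that unfolding lag_polar_def by auto
    moreover have "omega (w - proj_along L L' w) z' = 0" using isoL' P z'L' by blast
    moreover have "omega (w - proj_along L L' w) z' = omega w z' - omega (proj_along L L' w) z'"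
      unfolding omega_def by (simp add: inner_diff_right inner_diff_left)
    ultimately show ?thesis by linarith
  qed
  have zero: "0 \<in> \<Omega>"
  proof -
    obtain w where "w \<in> \<Omega>" using int interior_subset by blast
    hence "(1/2) *\<^sub>R w + (1/2) *\<^sub>R (-w) \<in> \<Omega>" using sym cvx by (intro convexD) auto
    thus ?thesis by simp
  qed
  define X where "X = {pi * R^2 | R. \<exists>S z0. R > 0 \<and> symplectic S \<and> S ` cball z0 R \<subseteq> \<Omega>}"
  have Xne: "X \<noteq> {}"
  proof -
    obtain z0 e where e: "e > 0" "ball z0 e \<subseteq> \<Omega>" using int by (metis all_not_in_conv mem_interior)
    have "cball z0 (e/2) \<subseteq> ball z0 e" using e(1) by (simp add: cball_subset_ball_iff)
    hence c: "cball z0 (e/2) \<subseteq> \<Omega>" using e(2) by blast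
    have "symplectic id" unfolding symplectic_def by (auto simp: linear_id)
    hence "\<exists>S z1. e/2 > 0 \<and> symplectic S \<and> S ` cball z1 (e/2) \<subseteq> \<Omega>"
      using c e(1) by (intro exI[of _ id] exI[of _ z0]) auto
    hence "pi * (e/2)^2 \<in> X" unfolding X_def by blast
    thus ?thesis by auto
  qed
  have key: "r *\<^sub>R z' \<in> \<Omega>" if r: "0 < r" "r < 1" for r
  proof -
    have "pi * r < pi" using r by simp
    also have "\<dots> \<le> Sup X" using assms(3) unfolding c_lin_min_def X_def by simp
    finally have "pi * r < Sup X" .
    then obtain x where "x \<in> X" "pi * r < x" using less_cSupD[OF Xne] by blast
    then obtain R S z0 where R: "R > 0" "symplectic S" "S ` cball z0 R \<subseteq> \<Omega>" and xR: "x = pi * R^2"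
      unfolding X_def by blast
    have lt: "pi * r < pi * R^2" using xR \<open>pi * r < x\<close> by simp
    have rR: "r < R^2" using lt by (metis mult_less_cancel_left_pos pi_gt_zero)
    have lin: "linear S" and bj: "bij S" and om: "\<And>a b. omega (S a) (S b) = omega a b"
      using R(2) unfolding symplectic_def by auto
    have cen: "S v \<in> \<Omega>" if "norm v \<le> R" for v
    proof -
      have "z0 + v \<in> cball z0 R" using that by (simp add: dist_norm)
      hence A: "S (z0 + v) \<in> \<Omega>" using R(3) by blast
      have "z0 - v \<in> cball z0 R" using that by (simp add: dist_norm)
      hence "S (z0 - v) \<in> \<Omega>" using R(3) by blast
      hence B: "- S (z0 - v) \<in> \<Omega>" by (rule sym)
      have "(1/2) *\<^sub>R S (z0 + v) + (1/2) *\<^sub>R (- S (z0 - v)) \<in> \<Omega>" using cvx A B by (intro convexD) auto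
      moreover have e1: "S (z0 + v) = S z0 + S v" by (rule linear_add[OF lin])
      moreover have e2: "- S (z0 - v) = S v - S z0" using linear_diff[OF lin, of z0 v] by simp
      moreover have "(1/2) *\<^sub>R (S z0 + S v) + (1/2) *\<^sub>R (S v - S z0) = (1/2) *\<^sub>R ((S z0 + S v) + (S v - S z0))"
        by (simp only: scaleR_add_right)
      moreover have "(S z0 + S v) + (S v - S z0) = 2 *\<^sub>R S v" by (simp add: scaleR_2)
      ultimately show ?thesis by simp
    qed
    obtain y where y: "S y = z'" using bj unfolding bij_def surj_def by metis
    have ny: "R * norm y \<le> 1"
    proof (cases "y = 0")
      case True thus ?thesis by simp
    next
      case False
      obtain a b where ab: "y = (a, b)" by (cases y)
      define c where "c = R / norm y"
      have c0: "c \<ge> 0" unfolding c_def using R(1) by simp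
      define v where "v = c *\<^sub>R (- b, a)"
      have "norm (- b, a) = norm y" unfolding ab by (simp add: norm_Pair add.commute)
      moreover have "norm v = \<bar>c\<bar> * norm (- b, a)" unfolding v_def by (rule norm_scaleR)
      ultimately have "norm v = c * norm y" using c0 by simp
      hence nv: "norm v = R" unfolding c_def using False by simp
      have "omega v y = c * (a \<bullet> a + b \<bullet> b)"
        unfolding v_def omega_def ab by (simp add: algebra_simps inner_commute)
      also have "a \<bullet> a + b \<bullet> b = (norm y)^2"
        unfolding ab by (simp only: power2_norm_eq_inner inner_Pair)
      also have "c * (norm y)^2 = R * norm y" unfolding c_def using False by (simp add: power2_eq_square)
      finally have "omega v y = R * norm y" .
      moreover have "omega (S v) z' \<le> 1" using pol cen nv by simp
      ultimately show ?thesis using om y by metis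
    qed
    have "norm (R^2 *\<^sub>R y) = R * (R * norm y)" using R(1) by (simp add: power2_eq_square)
    also have "\<dots> \<le> R * 1" using ny R(1) by (intro mult_left_mono) auto
    finally have "norm (R^2 *\<^sub>R y) \<le> R" by simp
    hence "S (R^2 *\<^sub>R y) \<in> \<Omega>" by (rule cen)
    hence t: "R^2 *\<^sub>R z' \<in> \<Omega>" using linear_scale[OF lin, of "R^2" y] y by simp
    have R2: "R^2 > 0" using R(1) by simp
    have q1: "r / R^2 \<le> 1" using rR R2 by simp
    have q0: "0 \<le> r / R^2" using r R2 by simp
    have "(r / R^2) *\<^sub>R (R^2 *\<^sub>R z') + (1 - r / R^2) *\<^sub>R 0 \<in> \<Omega>"
      using cvx t zero q0 q1 by (intro convexD) auto
    thus ?thesis using R2 by simp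
  qed
  have "z' \<in> \<Omega>"
  proof (rule closed_sequentially[OF compact_imp_closed[OF cpt]])
    fix n
    have "0 < 1 - 1 / real (Suc (Suc n))" by (simp add: field_simps)
    moreover have "1 - 1 / real (Suc (Suc n)) < 1" by simp
    ultimately show "(1 - 1 / real (Suc (Suc n))) *\<^sub>R z' \<in> \<Omega>" by (rule key)
  next
    have "(\<lambda>n. 1 / real (Suc (Suc n))) \<longlonglongrightarrow> 0"
      using LIMSEQ_Suc[OF LIMSEQ_Suc[OF lim_1_over_n]] by simp
    hence "(\<lambda>n. 1 - 1 / real (Suc (Suc n))) \<longlonglongrightarrow> 1 - 0" by (intro tendsto_intros)
    hence "(\<lambda>n. 1 - 1 / real (Suc (Suc n))) \<longlonglongrightarrow> 1" by simp
    hence "(\<lambda>n. (1 - 1 / real (Suc (Suc n))) *\<^sub>R z') \<longlonglongrightarrow> 1 *\<^sub>R z'" by (rule tendsto_scaleR[OF _ tendsto_const])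
    thus "(\<lambda>n. (1 - 1 / real (Suc (Suc n))) *\<^sub>R z') \<longlonglongrightarrow> z'" by simp
  qed
  moreover have "proj_along L' L z' = z'" by (rule proj_self[OF sL sL' assms(6) z'L'])
  ultimately show "z' \<in> proj_along L' L ` \<Omega>" by (metis image_eqI)
qed

end
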